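(* Let $n,m$ be positive integers, $A_1,\dots,A_m\in\mathbb{S}_n$, $\mathcal{A}(X)=(\langle A_i,X\rangle)_{i=1}^m$, $\mathcal{A}^*(y)=\sum_i y_iA_i$, with $\mathcal{A}\mathcal{A}^*$ invertible; let $b\in\mathbb{R}^m$, $C\in\mathbb{S}_n$, $D:=\mathcal{A}^*((\mathcal{A}\mathcal{A}^* )^{-1}b)$. Fix $\sigma_k>0$, $y^k\in\mathbb{R}^m$, $\widetilde{X}^k\in\mathbb{S}_n$, and let $$\Phi_k(S)=\langle D,S+C\rangle-\langle\widetilde{X}^k,\mathcal{A}^*(y^k)-S-C\rangle+\tfrac{\sigma_k}{2}\|\mathcal{A}^*(y^k)-S-C\|^2,\quad S\in\mathbb{S}_n,$$ so that $\nabla\Phi_k(S)=\widetilde{X}^k-\sigma_k(\mathcal{A}^*(y^k)-S-C)+D$. For each positive integer $q$ let $\mathcal{N}_q=\{Y\in\mathbb{R}^{n\times q}: \text{every row of }Y\text{ has Euclidean norm }1\}$ and $\Psi_k(Y)=\Phi_k(YY^{\intercal})$ for $Y\in\mathcal{N}_q$. Let $p$ be a positive integer, $Y\in\mathcal{N}_p$, $S=YY^{\intercal}$, and $X=\nabla\Phi_k(S)-\operatorname{Diag}(\nabla\Phi_k(S)S)$, and suppose $X\not\succeq0$. Let $\delta$ be a positive integer and let $V\in\mathbb{R}^{n\times\delta}$ be a matrix whose columns are eigenvectors of $X$ corresponding to negative eigenvalues. Set $\hat Y=[Y,\,0_{n\times\delta}]\in\mathcal{N}_{p+\delta}$ and $U=[0_{n\times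 p},\,V]$. Then $U$ is a tangent vector to $\mathcal{N}_{p+\delta}$ at $\hat Y$ and it is a second-order descent direction of $\Psi_k$ on $\mathcal{N}_{p+\delta}$ at $\hat Y$, namely $$\langle U,\operatorname{grad}\Psi_k(\hat Y)\rangle=0,\qquad\langle U,\operatorname{Hess}\Psi_k(\hat Y)[U]\rangle<0.$$
   Context: $\mathbb{S}_n$ denotes real symmetric $n\times n$ matrices, $\langle A,B\rangle=\mathrm{Tr}(A^{\intercal}B)$, $\|\cdot\|$ the Frobenius norm. For a square matrix $M$, $\operatorname{Diag}(M)$ is the diagonal matrix having the same diagonal as $M$. $\mathcal{N}_q$ (the oblique manifold) is regarded as a Riemannian submanifold of $\mathbb{R}^{n\times q}$ with the Frobenius inner product; $\operatorname{grad}$ and $\operatorname{Hess}$ denote the Riemannian gradient and Riemannian Hessian with respect to this induced metric. The tangent space at $Y$ is $\{U: \operatorname{diag}(UY^{\intercal})=0\}$. *)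

theory Defs
  imports Complex_Main "Jordan_Normal_Form.Char_Poly"
begin

(* Matrices are Jordan_Normal_Form matrices 'real mat' with explicit dimensions
   (dimensions p and p+delta occur in one statement, so type-indexed sizes are not usable). *)

definition mat_trace :: "real mat \<Rightarrow> real" where
  "mat_trace A = (\<Sum>i<dim_row A. A $$ (i,i))"

definition frob :: "real mat \<Rightarrow> real mat \<Rightarrow> real" where
  "frob A B = mat_trace (transpose_mat A * B)"

definition frob_norm :: "real mat \<Rightarrow> real" where
  "frob_norm A = sqrt (frob A A)"

definition sym_mat :: "nat \<Rightarrow> real mat \<Rightarrow> bool" where
  "sym_mat n A \<longleftrightarrow> A \<in> carrier_mat n n \<and> transpose_mat A = A"

definition psd :: "nat \<Rightarrow> real mat \<Rightarrow> bool" where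
  "psd n X \<longleftrightarrow> X \<in> carrier_mat n n \<and> (\<forall>v \<in> carrier_vec n. v \<bullet> (X *\<^sub>v v) \<ge> 0)"

definition Diag :: "real mat \<Rightarrow> real mat" where
  "Diag M = mat (dim_row M) (dim_col M) (\<lambda>(i,j). if i = j then M $$ (i,i) else 0)"

definition mat_inv :: "real mat \<Rightarrow> real mat" where
  "mat_inv M = (SOME B. B \<in> carrier_mat (dim_row M) (dim_row M)
       \<and> M * B = 1\<^sub>m (dim_row M) \<and> B * M = 1\<^sub>m (dim_row M))"

definition opA :: "nat \<Rightarrow> (nat \<Rightarrow> real mat) \<Rightarrow> real mat \<Rightarrow> real vec" where
  "opA m As X = vec m (\<lambda>i. frob (As i) X)"

definition opAstar :: "nat \<Rightarrow> nat \<Rightarrow> (nat \<Rightarrow> real mat) \<Rightarrow> real vec \<Rightarrow> real mat" where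
  "opAstar n m As y = mat n n (\<lambda>(r,c). \<Sum>i<m. y $ i * As i $$ (r,c))"

definition opAAstar :: "nat \<Rightarrow> (nat \<Rightarrow> real mat) \<Rightarrow> real mat" where
  "opAAstar m As = mat m m (\<lambda>(i,j). frob (As i) (As j))"

definition Dmat :: "nat \<Rightarrow> nat \<Rightarrow> (nat \<Rightarrow> real mat) \<Rightarrow> real vec \<Rightarrow> real mat" where
  "Dmat n m As b = opAstar n m As (mat_inv (opAAstar m As) *\<^sub>v b)"

definition Phi :: "nat \<Rightarrow> nat \<Rightarrow> (nat \<Rightarrow> real mat) \<Rightarrow> real vec \<Rightarrow> real mat \<Rightarrow> real
    \<Rightarrow> real vec \<Rightarrow> real mat \<Rightarrow> real mat \<Rightarrow> real" where
  "Phi n m As b C \<sigma> y Xt S =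
     frob (Dmat n m As b) (S + C)
     - frob Xt (opAstar n m As y - S - C)
     + \<sigma> / 2 * (frob_norm (opAstar n m As y - S - C))\<^sup>2"

definition gradPhi :: "nat \<Rightarrow> nat \<Rightarrow> (nat \<Rightarrow> real mat) \<Rightarrow> real vec \<Rightarrow> real mat \<Rightarrow> real
    \<Rightarrow> real vec \<Rightarrow> real mat \<Rightarrow> real mat \<Rightarrow> real mat" where
  "gradPhi n m As b C \<sigma> y Xt S =
     Xt - \<sigma> \<cdot>\<^sub>m (opAstar n m As y - S - C) + Dmat n m As b"

definition Psi :: "nat \<Rightarrow> nat \<Rightarrow> (nat \<Rightarrow> real mat) \<Rightarrow> real vec \<Rightarrow> real mat \<Rightarrow> real
    \<Rightarrow> real vec \<Rightarrow> real mat \<Rightarrow> real mat \<Rightarrow> real" where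
  "Psi n m As b C \<sigma> y Xt Y = Phi n m As b C \<sigma> y Xt (Y * transpose_mat Y)"

definition obl :: "nat \<Rightarrow> nat \<Rightarrow> real mat set" where
  "obl n q = {Y \<in> carrier_mat n q. \<forall>i<n. sqrt (\<Sum>j<q. (Y $$ (i,j))\<^sup>2) = 1}"

definition tangent_obl :: "nat \<Rightarrow> nat \<Rightarrow> real mat \<Rightarrow> real mat set" where
  "tangent_obl n q Y = {U \<in> carrier_mat n q. \<forall>i<n. (U * transpose_mat Y) $$ (i,i) = 0}"

(* orthogonal projection of R^{n x q} onto the tangent space at Y (Frobenius metric) *)
definition proj_obl :: "real mat \<Rightarrow> real mat \<Rightarrow> real mat" where
  "proj_obl Y Z = Z - Diag (Z * transpose_mat Y) * Y"

definition mat_curve_deriv :: "nat \<Rightarrow> nat \<Rightarrow> (real \<Rightarrow> real mat) \<Rightarrow> real \<Rightarrow> real mat \<Rightarrow> bool" where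
  "mat_curve_deriv r c \<gamma> t0 M \<longleftrightarrow> M \<in> carrier_mat r c \<and> (\<forall>t. \<gamma> t \<in> carrier_mat r c) \<and>
     (\<forall>i<r. \<forall>j<c. ((\<lambda>t. \<gamma> t $$ (i,j)) has_real_derivative M $$ (i,j)) (at t0))"

definition obl_curve :: "nat \<Rightarrow> nat \<Rightarrow> real mat \<Rightarrow> real mat \<Rightarrow> (real \<Rightarrow> real mat) \<Rightarrow> bool" where
  "obl_curve n q Y U \<gamma> \<longleftrightarrow> (\<forall>t. \<gamma> t \<in> obl n q) \<and> \<gamma> 0 = Y \<and> mat_curve_deriv n q \<gamma> 0 U"

(* Riemannian gradient of f on N_q (induced Frobenius metric) at Y: the tangent vector G
   representing the differential, i.e. (f o gamma)'(0) = <G, gamma'(0)> for every curve. *)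
definition is_rgrad :: "nat \<Rightarrow> nat \<Rightarrow> (real mat \<Rightarrow> real) \<Rightarrow> real mat \<Rightarrow> real mat \<Rightarrow> bool" where
  "is_rgrad n q f Y G \<longleftrightarrow> G \<in> tangent_obl n q Y \<and>
     (\<forall>U \<gamma>. obl_curve n q Y U \<gamma> \<longrightarrow> ((\<lambda>t. f (\<gamma> t)) has_real_derivative frob G U) (at 0))"

(* Riemannian Hessian on the Riemannian submanifold N_q: Levi-Civita covariant derivative of
   the gradient field along U, i.e. Hess f(Y)[U] = Proj_Y ( d/dt grad f(gamma(t)) |_{t=0} )
   for curves gamma on N_q with gamma(0) = Y, gamma'(0) = U. *)
definition is_rhess :: "nat \<Rightarrow> nat \<Rightarrow> (real mat \<Rightarrow> real) \<Rightarrow> real mat \<Rightarrow> real mat \<Rightarrow> real mat \<Rightarrow> bool" where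
  "is_rhess n q f Y U H \<longleftrightarrow> U \<in> tangent_obl n q Y \<and>
     (\<exists>g. (\<forall>Z \<in> obl n q. is_rgrad n q f Z (g Z)) \<and>
        (\<forall>\<gamma>. obl_curve n q Y U \<gamma> \<longrightarrow>
           (\<exists>W. mat_curve_deriv n q (\<lambda>t. g (\<gamma> t)) 0 W \<and> H = proj_obl Y W)))"

end

theory Submission
  imports Defs
begin

lemma frob_eq:
  assumes "A \<in> carrier_mat r c" "B \<in> carrier_mat r c"
  shows "frob A B = (\<Sum>i<c. \<Sum>k<r. A $$ (k,i) * B $$ (k,i))"
  using assms unfolding frob_def mat_trace_def
  by (auto simp: scalar_prod_def intro!: sum.cong)

lemma mult_tr_entry:
  assumes "Z \<in> carrier_mat n q" "a < n" "b < n"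
  shows "(Z * transpose_mat Z) $$ (a,b) = (\<Sum>j<q. Z $$ (a,j) * Z $$ (b,j))"
  using assms by (auto simp: scalar_prod_def intro!: sum.cong)

lemma frob_self_nonneg: "A \<in> carrier_mat r c \<Longrightarrow> frob A A \<ge> 0"
  by (simp add: frob_eq sum_nonneg)

lemma swap3: "(\<Sum>i\<in>A. \<Sum>k\<in>B. \<Sum>l\<in>C. f i k l) = (\<Sum>l\<in>C. \<Sum>k\<in>B. \<Sum>i\<in>A. f i k l)"
proof -
  have "(\<Sum>i\<in>A. \<Sum>k\<in>B. \<Sum>l\<in>C. f i k l) = (\<Sum>i\<in>A. \<Sum>l\<in>C. \<Sum>k\<in>B. f i k l)"
    by (rule sum.cong[OF refl], rule sum.swap)
  also have "\<dots> = (\<Sum>l\<in>C. \<Sum>i\<in>A. \<Sum>k\<in>B. f i k l)" by (rule sum.swap)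
  also have "\<dots> = (\<Sum>l\<in>C. \<Sum>k\<in>B. \<Sum>i\<in>A. f i k l)"
    by (rule sum.cong[OF refl], rule sum.swap)
  finally show ?thesis .
qed

lemma obl_row: "Z \<in> obl n q \<Longrightarrow> i < n \<Longrightarrow> (\<Sum>j<q. (Z$$(i,j))\<^sup>2) = 1"
  unfolding obl_def by auto

lemma obl_carr: "Z \<in> obl n q \<Longrightarrow> Z \<in> carrier_mat n q"
  unfolding obl_def by auto

lemma tangent_iff:
  assumes "Z \<in> carrier_mat n q"
  shows "U \<in> tangent_obl n q Z \<longleftrightarrow> U \<in> carrier_mat n q \<and> (\<forall>i<n. (\<Sum>j<q. U$$(i,j) * Z$$(i,j)) = 0)"
  unfolding tangent_obl_def using assms
  by (auto simp: scalar_prod_def atLeast0LessThan)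

lemma curve_tangent:
  assumes "obl_curve n q Z U \<gamma>"
  shows "U \<in> tangent_obl n q Z"
proof -
  have c: "\<forall>t. \<gamma> t \<in> obl n q" "\<gamma> 0 = Z" "mat_curve_deriv n q \<gamma> 0 U"
    using assms unfolding obl_curve_def by auto
  have Zc: "Z \<in> carrier_mat n q" using c obl_carr by metis
  have Uc: "U \<in> carrier_mat n q" using c(3) unfolding mat_curve_deriv_def by auto
  have d: "\<forall>i<n. \<forall>j<q. ((\<lambda>t. \<gamma> t $$ (i,j)) has_real_derivative U$$(i,j)) (at 0)"
    using c(3) unfolding mat_curve_deriv_def by auto
  show ?thesis unfolding tangent_iff[OF Zc]
  proof (intro conjI allI impI Uc)
    fix i assume i: "i < n"
    have e: "(\<lambda>t. \<Sum>j<q. \<gamma> t $$ (i,j) * \<gamma> t $$ (i,j)) = (\<lambda>t. 1)"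
      using obl_row[OF c(1)[rule_format] i] by (simp add: power2_eq_square)
    have "((\<lambda>t. \<Sum>j<q. \<gamma> t $$ (i,j) * \<gamma> t $$ (i,j)) has_real_derivative
        (\<Sum>j<q. U$$(i,j) * Z$$(i,j) + U$$(i,j) * Z$$(i,j))) (at 0)"
      apply (rule DERIV_sum)
      using d i c(2) by (auto intro!: derivative_eq_intros)
    hence "(\<Sum>j<q. U$$(i,j) * Z$$(i,j) + U$$(i,j) * Z$$(i,j)) = 0"
      unfolding e using DERIV_unique DERIV_const by blast
    thus "(\<Sum>j<q. U$$(i,j) * Z$$(i,j)) = 0"
      using sum_distrib_left[of 2 "\<lambda>j. U$$(i,j)*Z$$(i,j)" "{..<q}"] by simp
  qed
qed

definition ncurve :: "nat \<Rightarrow> nat \<Rightarrow> real mat \<Rightarrow> real mat \<Rightarrow> real \<Rightarrow> real mat" where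
  "ncurve n q Z U t = mat n q (\<lambda>(i,j). (Z$$(i,j) + t * U$$(i,j)) / sqrt (1 + t\<^sup>2 * (\<Sum>k<q. (U$$(i,k))\<^sup>2)))"

lemma ncurve_ok:
  assumes Z: "Z \<in> obl n q" and U: "U \<in> tangent_obl n q Z"
  shows "obl_curve n q Z U (ncurve n q Z U)"
proof -
  have Zc: "Z \<in> carrier_mat n q" using Z obl_carr by metis
  have Uc: "U \<in> carrier_mat n q" and UZ: "\<forall>i<n. (\<Sum>j<q. U$$(i,j) * Z$$(i,j)) = 0"
    using U unfolding tangent_iff[OF Zc] by auto
  have pos: "1 + t\<^sup>2 * (\<Sum>k<q. (U$$(i,k))\<^sup>2) > 0" for t :: real and i
    by (intro add_pos_nonneg) (auto intro!: mult_nonneg_nonneg sum_nonneg)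
  have inobl: "ncurve n q Z U t \<in> obl n q" for t
  proof -
    have "(\<Sum>j<q. ((Z$$(i,j) + t * U$$(i,j)) / sqrt (1 + t\<^sup>2 * (\<Sum>k<q. (U$$(i,k))\<^sup>2)))\<^sup>2) = 1"
      if i: "i < n" for i
    proof -
      let ?a = "(\<Sum>k<q. (U$$(i,k))\<^sup>2)"
      have "(\<Sum>j<q. (Z$$(i,j) + t * U$$(i,j))\<^sup>2) = (\<Sum>j<q. (Z$$(i,j))\<^sup>2) + 2*t*(\<Sum>j<q. U$$(i,j) * Z$$(i,j)) + t\<^sup>2 * ?a"
        by (simp add: power2_eq_square algebra_simps sum.distrib sum_distrib_left)
      also have "\<dots> = 1 + t\<^sup>2 * ?a" using UZ i obl_row[OF Z i] by simp
      finally have s: "(\<Sum>j<q. (Z$$(i,j) + t * U$$(i,j))\<^sup>2) = 1 + t\<^sup>2 * ?a" .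
      have "(\<Sum>j<q. ((Z$$(i,j) + t * U$$(i,j)) / sqrt (1 + t\<^sup>2 * ?a))\<^sup>2)
          = (\<Sum>j<q. (Z$$(i,j) + t * U$$(i,j))\<^sup>2) / (1 + t\<^sup>2 * ?a)"
        using pos[of t i] by (simp add: power_divide sum_divide_distrib)
      thus ?thesis using s pos[of t i] by simp
    qed
    thus ?thesis unfolding obl_def ncurve_def by auto
  qed
  have z0: "ncurve n q Z U 0 = Z"
    using Zc unfolding ncurve_def by (auto intro!: eq_matI)
  have der: "((\<lambda>t. ncurve n q Z U t $$ (i,j)) has_real_derivative U$$(i,j)) (at 0)"
    if "i < n" "j < q" for i j
  proof -
    have e: "(\<lambda>t. ncurve n q Z U t $$ (i,j)) = (\<lambda>t. (Z$$(i,j) + t * U$$(i,j)) / sqrt (1 + t\<^sup>2 * (\<Sum>k<q. (U$$(i,k))\<^sup>2)))"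
      using that unfolding ncurve_def by auto
    show ?thesis unfolding e
      by (rule derivative_eq_intros refl | simp add: pos)+
  qed
  show ?thesis unfolding obl_curve_def mat_curve_deriv_def
    using inobl z0 der Uc obl_carr by blast
qed

lemma rgrad_unique:
  assumes Z: "Z \<in> obl n q" and g1: "is_rgrad n q f Z G1" and g2: "is_rgrad n q f Z G2"
  shows "G1 = G2"
proof -
  have Zc: "Z \<in> carrier_mat n q" using Z obl_carr by metis
  have t1: "G1 \<in> tangent_obl n q Z" and t2: "G2 \<in> tangent_obl n q Z"
    using g1 g2 unfolding is_rgrad_def by auto
  have c1: "G1 \<in> carrier_mat n q" and c2: "G2 \<in> carrier_mat n q"
    using t1 t2 unfolding tangent_iff[OF Zc] by auto
  define U where "U = G1 - G2"
  have Uc: "U \<in> carrier_mat n q" using c1 c2 U_def by auto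
  have Ue: "U $$ (i,j) = G1 $$ (i,j) - G2 $$ (i,j)" if "i<n" "j<q" for i j
    using that c1 c2 U_def by auto
  have "U \<in> tangent_obl n q Z"
    unfolding tangent_iff[OF Zc]
  proof (intro conjI allI impI Uc)
    fix i assume i: "i<n"
    have "(\<Sum>j<q. U$$(i,j) * Z$$(i,j)) = (\<Sum>j<q. G1$$(i,j) * Z$$(i,j)) - (\<Sum>j<q. G2$$(i,j) * Z$$(i,j))"
      unfolding sum_subtractf[symmetric] by (rule sum.cong) (auto simp: Ue i algebra_simps)
    thus "(\<Sum>j<q. U$$(i,j) * Z$$(i,j)) = 0" using t1 t2 i unfolding tangent_iff[OF Zc] by auto
  qed
  hence cu: "obl_curve n q Z U (ncurve n q Z U)" using ncurve_ok Z by blast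
  have "frob G1 U = frob G2 U"
    using g1 g2 cu unfolding is_rgrad_def using DERIV_unique by blast
  hence "(\<Sum>i<q. \<Sum>k<n. G1 $$ (k,i) * U $$ (k,i)) - (\<Sum>i<q. \<Sum>k<n. G2 $$ (k,i) * U $$ (k,i)) = 0"
    using frob_eq[OF c1 Uc] frob_eq[OF c2 Uc] by simp
  hence "(\<Sum>i<q. \<Sum>k<n. (U $$ (k,i))\<^sup>2) = 0"
    by (simp add: sum_subtractf[symmetric] Ue power2_eq_square algebra_simps)
  hence z: "\<forall>i<q. \<forall>k<n. (U $$ (k,i))\<^sup>2 = 0"
    by (subst (asm) sum_nonneg_eq_0_iff) (auto simp: sum_nonneg_eq_0_iff sum_nonneg)
  show ?thesis
    by (rule eq_matI) (use c1 c2 z Ue in auto)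
qed

lemma sum_split_add: fixes p d :: nat shows "(\<Sum>j<p+d. f j) = (\<Sum>j<p. f j) + (\<Sum>j<d. (f (p+j) :: real))"
  by (induct d) (auto simp: add.assoc)

lemma Diag_mult_entry:
  assumes "M \<in> carrier_mat n n" "Y \<in> carrier_mat n q" "k < n" "i < q"
  shows "(Diag M * Y) $$ (k,i) = M $$ (k,k) * Y $$ (k,i)"
proof -
  have "(Diag M * Y) $$ (k,i) = (\<Sum>l<n. (if k = l then M $$ (k,k) else 0) * Y $$ (l,i))"
    using assms unfolding Diag_def by (auto simp: scalar_prod_def atLeast0LessThan intro!: sum.cong)
  also have "\<dots> = M $$ (k,k) * Y $$ (k,i)"
    using assms(3) by (simp add: if_distrib[of "\<lambda>x. x * _"] sum.delta cong: if_cong)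
  finally show ?thesis .
qed

locale phisetup =
  fixes n :: nat and Dm Mm Xt C :: "real mat" and \<sigma> :: real
  assumes carr: "Dm \<in> carrier_mat n n" "Mm \<in> carrier_mat n n" "Xt \<in> carrier_mat n n" "C \<in> carrier_mat n n"
  and symD: "\<And>a b. a<n \<Longrightarrow> b<n \<Longrightarrow> Dm$$(a,b) = Dm$$(b,a)"
  and symM: "\<And>a b. a<n \<Longrightarrow> b<n \<Longrightarrow> Mm$$(a,b) = Mm$$(b,a)"
  and symX: "\<And>a b. a<n \<Longrightarrow> b<n \<Longrightarrow> Xt$$(a,b) = Xt$$(b,a)"
  and symC: "\<And>a b. a<n \<Longrightarrow> b<n \<Longrightarrow> C$$(a,b) = C$$(b,a)"
begin

definition Psi0 :: "real mat \<Rightarrow> real" where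
 "Psi0 Z = frob Dm (Z * transpose_mat Z + C) - frob Xt (Mm - Z * transpose_mat Z - C)
    + \<sigma>/2 * (frob_norm (Mm - Z * transpose_mat Z - C))\<^sup>2"

definition sE :: "nat \<Rightarrow> real mat \<Rightarrow> nat \<Rightarrow> nat \<Rightarrow> real" where
  "sE q Z a b = (\<Sum>j<q. Z$$(a,j) * Z$$(b,j))"

definition gr :: "nat \<Rightarrow> real mat \<Rightarrow> nat \<Rightarrow> nat \<Rightarrow> real" where
  "gr q Z a b = Xt$$(a,b) - \<sigma>*(Mm$$(a,b) - sE q Z a b - C$$(a,b)) + Dm$$(a,b)"

lemma gr_sym: "a<n \<Longrightarrow> b<n \<Longrightarrow> gr q Z a b = gr q Z b a"
  unfolding gr_def sE_def using symD symM symX symC by (simp add: mult.commute)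

lemma psi_expand:
  assumes "Z \<in> carrier_mat n q"
  shows "Psi0 Z = (\<Sum>a<n. \<Sum>b<n. Dm$$(b,a)*(sE q Z b a + C$$(b,a)) - Xt$$(b,a)*(Mm$$(b,a) - sE q Z b a - C$$(b,a))
          + \<sigma>/2*(Mm$$(b,a) - sE q Z b a - C$$(b,a))\<^sup>2)"
proof -
  have S: "Z * transpose_mat Z \<in> carrier_mat n n" using assms by auto
  have N: "(frob_norm (Mm - Z * transpose_mat Z - C))\<^sup>2 = frob (Mm - Z * transpose_mat Z - C) (Mm - Z * transpose_mat Z - C)"
    unfolding frob_norm_def using S carr by (intro real_sqrt_pow2 frob_self_nonneg) auto
  have M: "Mm - Z * transpose_mat Z - C \<in> carrier_mat n n" "Z * transpose_mat Z + C \<in> carrier_mat n n"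
    using S carr by auto
  have f1: "frob Dm (Z * transpose_mat Z + C) = (\<Sum>a<n. \<Sum>b<n. Dm$$(b,a)*(sE q Z b a + C$$(b,a)))"
    using frob_eq[OF carr(1) M(2)] S carr assms by (auto simp: scalar_prod_def sE_def atLeast0LessThan intro!: sum.cong)
  have f2: "frob Xt (Mm - Z * transpose_mat Z - C) = (\<Sum>a<n. \<Sum>b<n. Xt$$(b,a)*(Mm$$(b,a) - sE q Z b a - C$$(b,a)))"
    using frob_eq[OF carr(3) M(1)] S carr assms by (auto simp: scalar_prod_def sE_def atLeast0LessThan intro!: sum.cong)
  have f3: "frob (Mm - Z * transpose_mat Z - C) (Mm - Z * transpose_mat Z - C) = (\<Sum>a<n. \<Sum>b<n. (Mm$$(b,a) - sE q Z b a - C$$(b,a))\<^sup>2)"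
    using frob_eq[OF M(1) M(1)] S carr assms by (auto simp: scalar_prod_def sE_def atLeast0LessThan power2_eq_square intro!: sum.cong)
  show ?thesis unfolding Psi0_def N f1 f2 f3
    by (simp add: sum_distrib_left sum.distrib sum_subtractf)
qed

lemma sE_deriv:
  assumes "\<forall>i<n. \<forall>j<q. ((\<lambda>t. \<gamma> t $$ (i,j)) has_real_derivative U$$(i,j)) (at 0)" "\<gamma> 0 = Z" "a<n" "b<n"
  shows "((\<lambda>t. sE q (\<gamma> t) a b) has_real_derivative (\<Sum>j<q. U$$(a,j)*Z$$(b,j) + Z$$(a,j)*U$$(b,j))) (at 0)"
  unfolding sE_def
  apply (rule DERIV_sum)
  using assms by (auto intro!: derivative_eq_intros)

lemma psi_deriv:
  assumes "\<forall>i<n. \<forall>j<q. ((\<lambda>t. \<gamma> t $$ (i,j)) has_real_derivative U$$(i,j)) (at 0)" "\<gamma> 0 = Z"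
    "\<forall>t. \<gamma> t \<in> carrier_mat n q"
  shows "((\<lambda>t. Psi0 (\<gamma> t)) has_real_derivative
     (\<Sum>a<n. \<Sum>b<n. gr q Z b a * (\<Sum>j<q. U$$(b,j)*Z$$(a,j) + Z$$(b,j)*U$$(a,j)))) (at 0)"
proof -
  have e: "(\<lambda>t. Psi0 (\<gamma> t)) = (\<lambda>t. (\<Sum>a<n. \<Sum>b<n. Dm$$(b,a)*(sE q (\<gamma> t) b a + C$$(b,a)) - Xt$$(b,a)*(Mm$$(b,a) - sE q (\<gamma> t) b a - C$$(b,a))
          + \<sigma>/2*(Mm$$(b,a) - sE q (\<gamma> t) b a - C$$(b,a))\<^sup>2))"
    using psi_expand assms(3) by auto
  show ?thesis unfolding e
    apply (rule DERIV_sum)+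
    apply (rule derivative_eq_intros sE_deriv[OF assms(1,2)] | simp)+
    apply (simp add: gr_def assms(2) algebra_simps)
    done
qed


definition ghat :: "nat \<Rightarrow> real mat \<Rightarrow> real mat" where
  "ghat q Z = mat n q (\<lambda>(k,i). 2*(\<Sum>l<n. gr q Z k l * Z$$(l,i))
      - 2*(\<Sum>l<n. \<Sum>j<q. gr q Z k l * Z$$(l,j) * Z$$(k,j)) * Z$$(k,i))"

lemma ghat_carr: "ghat q Z \<in> carrier_mat n q" unfolding ghat_def by auto

lemma ghat_tangent:
  assumes Z: "Z \<in> obl n q"
  shows "ghat q Z \<in> tangent_obl n q Z"
proof -
  have Zc: "Z \<in> carrier_mat n q" using Z obl_carr by metis
  show ?thesis unfolding tangent_iff[OF Zc]
  proof (intro conjI allI impI ghat_carr)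
    fix k assume k: "k < n"
    let ?c = "(\<Sum>l<n. \<Sum>j<q. gr q Z k l * Z$$(l,j) * Z$$(k,j))"
    have "(\<Sum>i<q. ghat q Z $$ (k,i) * Z$$(k,i)) = (\<Sum>i<q. 2*(\<Sum>l<n. gr q Z k l * Z$$(l,i)) * Z$$(k,i) - 2 * ?c * (Z$$(k,i))\<^sup>2)"
      using k unfolding ghat_def by (auto intro!: sum.cong simp: algebra_simps power2_eq_square)
    also have "\<dots> = 2 * (\<Sum>i<q. \<Sum>l<n. gr q Z k l * Z$$(l,i) * Z$$(k,i)) - 2 * ?c * (\<Sum>i<q. (Z$$(k,i))\<^sup>2)"
    proof -
      have h1: "(\<Sum>i<q. 2*(\<Sum>l<n. gr q Z k l * Z$$(l,i)) * Z$$(k,i)) = 2 * (\<Sum>i<q. \<Sum>l<n. gr q Z k l * Z$$(l,i) * Z$$(k,i))"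
        by (simp add: sum_distrib_left sum_distrib_right mult.assoc)
      have h2: "(\<Sum>i<q. 2 * ?c * (Z$$(k,i))\<^sup>2) = 2 * ?c * (\<Sum>i<q. (Z$$(k,i))\<^sup>2)"
        by (rule sum_distrib_left[symmetric])
      show ?thesis unfolding sum_subtractf h1 h2 ..
    qed
    also have "(\<Sum>i<q. \<Sum>l<n. gr q Z k l * Z$$(l,i) * Z$$(k,i)) = ?c" by (rule sum.swap)
    finally show "(\<Sum>i<q. ghat q Z $$ (k,i) * Z$$(k,i)) = 0" using obl_row[OF Z k] by simp
  qed
qed

lemma grad_identity:
  assumes Zc: "Z \<in> carrier_mat n q" and U: "U \<in> tangent_obl n q Z"
  shows "(\<Sum>a<n. \<Sum>b<n. gr q Z b a * (\<Sum>j<q. U$$(b,j)*Z$$(a,j) + Z$$(b,j)*U$$(a,j)))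
        = frob (ghat q Z) U"
proof -
  have Uc: "U \<in> carrier_mat n q" and UZ: "\<forall>i<n. (\<Sum>j<q. U$$(i,j) * Z$$(i,j)) = 0"
    using U unfolding tangent_iff[OF Zc] by auto
  let ?T = "\<Sum>a<n. \<Sum>b<n. \<Sum>j<q. gr q Z b a * U$$(b,j) * Z$$(a,j)"
  have L: "(\<Sum>a<n. \<Sum>b<n. gr q Z b a * (\<Sum>j<q. U$$(b,j)*Z$$(a,j) + Z$$(b,j)*U$$(a,j)))
     = ?T + (\<Sum>a<n. \<Sum>b<n. \<Sum>j<q. gr q Z b a * Z$$(b,j) * U$$(a,j))"
    by (simp add: sum_distrib_left sum.distrib algebra_simps)
  have "(\<Sum>a<n. \<Sum>b<n. \<Sum>j<q. gr q Z b a * Z$$(b,j) * U$$(a,j))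
      = (\<Sum>b<n. \<Sum>a<n. \<Sum>j<q. gr q Z b a * Z$$(b,j) * U$$(a,j))" by (rule sum.swap)
  also have "\<dots> = ?T"
    by (intro sum.cong refl) (simp add: gr_sym algebra_simps)
  finally have L2: "(\<Sum>a<n. \<Sum>b<n. gr q Z b a * (\<Sum>j<q. U$$(b,j)*Z$$(a,j) + Z$$(b,j)*U$$(a,j))) = 2 * ?T"
    using L by simp
  define c where "c = (\<lambda>k. (\<Sum>l<n. \<Sum>j<q. gr q Z k l * Z$$(l,j) * Z$$(k,j)))"
  have "frob (ghat q Z) U = (\<Sum>i<q. \<Sum>k<n. ghat q Z $$ (k,i) * U $$ (k,i))"
    by (rule frob_eq[OF ghat_carr Uc])
  also have "\<dots> = (\<Sum>i<q. \<Sum>k<n. 2*(\<Sum>l<n. gr q Z k l * Z$$(l,i) * U$$(k,i)) - 2 * c k * (Z$$(k,i) * U$$(k,i)))"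
    unfolding ghat_def c_def by (auto intro!: sum.cong simp: algebra_simps sum_distrib_right sum_distrib_left)
  also have "\<dots> = 2 * (\<Sum>i<q. \<Sum>k<n. \<Sum>l<n. gr q Z k l * Z$$(l,i) * U$$(k,i))
       - 2 * (\<Sum>i<q. \<Sum>k<n. c k * (Z$$(k,i) * U$$(k,i)))"
  proof -
    have h1: "(\<Sum>i<q. \<Sum>k<n. 2*(\<Sum>l<n. gr q Z k l * Z$$(l,i) * U$$(k,i))) = 2 * (\<Sum>i<q. \<Sum>k<n. \<Sum>l<n. gr q Z k l * Z$$(l,i) * U$$(k,i))"
      by (simp only: sum_distrib_left)
    have h2: "(\<Sum>i<q. \<Sum>k<n. 2 * c k * (Z$$(k,i) * U$$(k,i))) = 2 * (\<Sum>i<q. \<Sum>k<n. c k * (Z$$(k,i) * U$$(k,i)))"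
      by (simp only: sum_distrib_left mult.assoc)
    show ?thesis unfolding sum_subtractf h1 h2 ..
  qed
  also have "(\<Sum>i<q. \<Sum>k<n. c k * (Z$$(k,i) * U$$(k,i))) = (\<Sum>k<n. c k * (\<Sum>i<q. U$$(k,i) * Z$$(k,i)))"
    by (subst sum.swap) (simp add: sum_distrib_left algebra_simps)
  also have "\<dots> = 0" using UZ by simp
  also have "(\<Sum>i<q. \<Sum>k<n. \<Sum>l<n. gr q Z k l * Z$$(l,i) * U$$(k,i)) = (\<Sum>l<n. \<Sum>k<n. \<Sum>i<q. gr q Z k l * Z$$(l,i) * U$$(k,i))"
    by (rule swap3)
  also have "\<dots> = ?T" by (simp add: algebra_simps)
  finally show ?thesis using L2 by simp
qed

lemma ghat_rgrad:
  assumes Z: "Z \<in> obl n q"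
  shows "is_rgrad n q Psi0 Z (ghat q Z)"
  unfolding is_rgrad_def
proof (intro conjI allI impI ghat_tangent[OF Z])
  fix U \<gamma> assume c: "obl_curve n q Z U \<gamma>"
  have Zc: "Z \<in> carrier_mat n q" using Z obl_carr by metis
  have d: "\<forall>i<n. \<forall>j<q. ((\<lambda>t. \<gamma> t $$ (i,j)) has_real_derivative U$$(i,j)) (at 0)"
      "\<gamma> 0 = Z" "\<forall>t. \<gamma> t \<in> carrier_mat n q"
    using c unfolding obl_curve_def mat_curve_deriv_def using obl_carr by auto
  show "((\<lambda>t. Psi0 (\<gamma> t)) has_real_derivative frob (ghat q Z) U) (at 0)"
    using psi_deriv[OF d] grad_identity[OF Zc curve_tangent[OF c]] by simp
qed

lemma gr_deriv0:
  assumes "\<forall>i<n. \<forall>j<q. ((\<lambda>t. \<gamma> t $$ (i,j)) has_real_derivative U$$(i,j)) (at 0)" "\<gamma> 0 = Z"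
    and orth: "\<forall>k<n. \<forall>l<n. \<forall>j<q. Z$$(k,j) * U$$(l,j) = 0" and "a<n" "b<n"
  shows "((\<lambda>t. gr q (\<gamma> t) a b) has_real_derivative 0) (at 0)"
proof -
  have "((\<lambda>t. gr q (\<gamma> t) a b) has_real_derivative -\<sigma> * (- (\<Sum>j<q. U$$(a,j)*Z$$(b,j) + Z$$(a,j)*U$$(b,j)))) (at 0)"
    unfolding gr_def
    by (rule derivative_eq_intros sE_deriv[OF assms(1,2)] refl | simp add: assms)+
  moreover have "(\<Sum>j<q. U$$(a,j)*Z$$(b,j) + Z$$(a,j)*U$$(b,j)) = 0"
  proof (rule sum.neutral, rule ballI)
    fix j assume "j \<in> {..<q}"
    hence h: "U$$(a,j) * Z$$(b,j) = 0" "Z$$(a,j) * U$$(b,j) = 0" using orth assms(4,5) by (auto simp: mult.commute)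
    show "U$$(a,j)*Z$$(b,j) + Z$$(a,j)*U$$(b,j) = 0" by (simp only: h)
  qed
  ultimately show ?thesis by simp
qed

definition W0 :: "nat \<Rightarrow> real mat \<Rightarrow> real mat \<Rightarrow> real mat" where
  "W0 q Z U = mat n q (\<lambda>(k,i). 2*(\<Sum>l<n. gr q Z k l * U$$(l,i))
      - 2*(\<Sum>l<n. \<Sum>j<q. gr q Z k l * Z$$(l,j) * Z$$(k,j)) * U$$(k,i))"

lemma ghat_deriv:
  assumes d: "\<forall>i<n. \<forall>j<q. ((\<lambda>t. \<gamma> t $$ (i,j)) has_real_derivative U$$(i,j)) (at 0)" and z: "\<gamma> 0 = Z"
    and orth: "\<forall>k<n. \<forall>l<n. \<forall>j<q. Z$$(k,j) * U$$(l,j) = 0" and k: "k<n" and i: "i<q"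
  shows "((\<lambda>t. ghat q (\<gamma> t) $$ (k,i)) has_real_derivative W0 q Z U $$ (k,i)) (at 0)"
proof -
  have g0: "((\<lambda>t. gr q (\<gamma> t) a b) has_real_derivative 0) (at 0)" if "a<n" "b<n" for a b
    using gr_deriv0[OF d z orth that] .
  have dg: "((\<lambda>t. \<gamma> t $$ (a,j)) has_real_derivative U$$(a,j)) (at 0)" if "a<n" "j<q" for a j
    using d that by auto
  have d1: "((\<lambda>t. \<Sum>l<n. gr q (\<gamma> t) k l * \<gamma> t $$ (l,i)) has_real_derivative (\<Sum>l<n. gr q Z k l * U$$(l,i))) (at 0)"
  proof (rule DERIV_sum)
    fix l assume "l \<in> {..<n}"
    hence l: "l<n" by auto
    show "((\<lambda>t. gr q (\<gamma> t) k l * \<gamma> t $$ (l,i)) has_real_derivative gr q Z k l * U$$(l,i)) (at 0)"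
      using DERIV_mult[OF g0[OF k l] dg[OF l i]] z by (simp add: mult.commute)
  qed
  have d2: "((\<lambda>t. \<Sum>l<n. \<Sum>j<q. gr q (\<gamma> t) k l * \<gamma> t $$ (l,j) * \<gamma> t $$ (k,j)) has_real_derivative (\<Sum>l<n. \<Sum>j<q. 0)) (at 0)"
  proof (intro DERIV_sum)
    fix l j assume "l \<in> {..<n}" "j \<in> {..<q}"
    hence l: "l<n" and j: "j<q" by auto
    have o1: "Z$$(k,j) * U$$(l,j) = 0" "Z$$(l,j) * U$$(k,j) = 0" using orth k l j by auto
    have D: "((\<lambda>t. gr q (\<gamma> t) k l * \<gamma> t $$ (l,j) * \<gamma> t $$ (k,j)) has_real_derivative
       (0 * Z$$(l,j) + U$$(l,j) * gr q Z k l) * Z$$(k,j) + U$$(k,j) * (gr q Z k l * Z$$(l,j))) (at 0)"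
      using DERIV_mult[OF DERIV_mult[OF g0[OF k l] dg[OF l j]] dg[OF k j]] unfolding z .
    have v: "(0 * Z$$(l,j) + U$$(l,j) * gr q Z k l) * Z$$(k,j) + U$$(k,j) * (gr q Z k l * Z$$(l,j)) = 0"
    proof -
      have "(0 * Z$$(l,j) + U$$(l,j) * gr q Z k l) * Z$$(k,j) + U$$(k,j) * (gr q Z k l * Z$$(l,j))
          = gr q Z k l * (Z$$(k,j) * U$$(l,j)) + gr q Z k l * (Z$$(l,j) * U$$(k,j))" by (simp add: algebra_simps)
      also have "\<dots> = 0" by (simp only: o1)
      finally show ?thesis .
    qed
    show "((\<lambda>t. gr q (\<gamma> t) k l * \<gamma> t $$ (l,j) * \<gamma> t $$ (k,j)) has_real_derivative 0) (at 0)"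
      using D unfolding v .
  qed
  have e: "(\<lambda>t. ghat q (\<gamma> t) $$ (k,i)) = (\<lambda>t. 2*(\<Sum>l<n. gr q (\<gamma> t) k l * \<gamma> t $$ (l,i))
      - 2*(\<Sum>l<n. \<Sum>j<q. gr q (\<gamma> t) k l * \<gamma> t $$ (l,j) * \<gamma> t $$ (k,j)) * \<gamma> t $$ (k,i))"
    unfolding ghat_def using k i by auto
  show ?thesis unfolding e
    using DERIV_diff[OF DERIV_cmult[OF d1, of 2] DERIV_mult[OF DERIV_cmult[OF d2, of 2] dg[OF k i]]] z k i
    unfolding W0_def by (simp add: algebra_simps)
qed

end

lemma sym_entry: "sym_mat n A \<Longrightarrow> a<n \<Longrightarrow> b<n \<Longrightarrow> A$$(a,b) = A$$(b,a)"
  unfolding sym_mat_def by (metis carrier_matD index_transpose_mat(1))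

lemma opAstar_sym:
  assumes "\<forall>i<m. sym_mat n (As i)" "a<n" "b<n"
  shows "opAstar n m As v $$ (a,b) = opAstar n m As v $$ (b,a)"
  unfolding opAstar_def using assms sym_entry by (auto intro!: sum.cong)

theorem theorem4p5:
  fixes n m p \<delta> :: nat and As :: "nat \<Rightarrow> real mat" and b :: "real vec"
    and C Xt Y V :: "real mat" and \<sigma> :: real and y :: "real vec"
  assumes "n > 0" and "m > 0"
    and "\<forall>i<m. sym_mat n (As i)"
    and "invertible_mat (opAAstar m As)"
    and "b \<in> carrier_vec m" and "sym_mat n C"
    and "\<sigma> > 0" and "y \<in> carrier_vec m" and "sym_mat n Xt"
    and "p > 0" and "Y \<in> obl n p"
    and "\<not> psd n (gradPhi n m As b C \<sigma> y Xt (Y * transpose_mat Y)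
            - Diag (gradPhi n m As b C \<sigma> y Xt (Y * transpose_mat Y) * (Y * transpose_mat Y)))"
    and "\<delta> > 0" and "V \<in> carrier_mat n \<delta>"
    and "\<forall>j<\<delta>. \<exists>lam<0. eigenvector
            (gradPhi n m As b C \<sigma> y Xt (Y * transpose_mat Y)
              - Diag (gradPhi n m As b C \<sigma> y Xt (Y * transpose_mat Y) * (Y * transpose_mat Y)))
            (col V j) lam"
  shows "let Yh = mat n (p + \<delta>) (\<lambda>(i,j). if j < p then Y $$ (i,j) else 0);
             U = mat n (p + \<delta>) (\<lambda>(i,j). if j < p then 0 else V $$ (i, j - p));
             f = Psi n m As b C \<sigma> y Xt
         in Yh \<in> obl n (p + \<delta>) \<and> U \<in> tangent_obl n (p + \<delta>) Yh
          \<and> (\<exists>G. is_rgrad n (p + \<delta>) f Yh G)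
          \<and> (\<forall>G. is_rgrad n (p + \<delta>) f Yh G \<longrightarrow> frob U G = 0)
          \<and> (\<exists>H. is_rhess n (p + \<delta>) f Yh U H)
          \<and> (\<forall>H. is_rhess n (p + \<delta>) f Yh U H \<longrightarrow> frob U H < 0)"
proof -
  note As = assms(3)
  define Dm where "Dm = Dmat n m As b"
  define Mm where "Mm = opAstar n m As y"
  have XtC: "Xt \<in> carrier_mat n n" "C \<in> carrier_mat n n" using assms(6,9) unfolding sym_mat_def by auto
  interpret L: phisetup n Dm Mm Xt C \<sigma>
    apply unfold_locales
    using XtC apply (auto simp: Dm_def Mm_def Dmat_def opAstar_def)[4]
    using opAstar_sym[OF As] sym_entry[OF assms(6)] sym_entry[OF assms(9)]
    by (auto simp: Dm_def Mm_def Dmat_def)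
  have PsiEq: "Psi n m As b C \<sigma> y Xt = L.Psi0"
    by (rule ext) (simp add: Psi_def Phi_def L.Psi0_def Dm_def[symmetric] Mm_def[symmetric])
  define q where "q = p + \<delta>"
  define Yh where "Yh = mat n q (\<lambda>(i,j). if j < p then Y $$ (i,j) else 0)"
  define U where "U = mat n q (\<lambda>(i,j). if j < p then 0 else V $$ (i, j - p))"
  have Yc: "Y \<in> carrier_mat n p" using assms(11) obl_carr by metis
  have Yhc: "Yh \<in> carrier_mat n q" and Uc: "U \<in> carrier_mat n q" unfolding Yh_def U_def by auto
  have Yh_ent: "Yh $$ (k,j) = (if j < p then Y $$ (k,j) else 0)" if "k<n" "j<q" for k j
    using that unfolding Yh_def by auto
  have U_ent: "U $$ (k,j) = (if j < p then 0 else V $$ (k,j-p))" if "k<n" "j<q" for k j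
    using that unfolding U_def by auto
  have orth: "\<forall>k<n. \<forall>l<n. \<forall>j<q. Yh$$(k,j) * U$$(l,j) = 0"
    using Yh_ent U_ent by auto
  have Yh_obl: "Yh \<in> obl n q"
    unfolding obl_def
  proof (intro CollectI conjI Yhc allI impI)
    fix k assume k: "k<n"
    have "(\<Sum>j<q. (Yh$$(k,j))\<^sup>2) = (\<Sum>j<p. (Y$$(k,j))\<^sup>2)"
      unfolding q_def sum_split_add using Yh_ent k q_def by simp
    thus "sqrt (\<Sum>j<q. (Yh$$(k,j))\<^sup>2) = 1" using obl_row[OF assms(11) k] by simp
  qed
  have U_tan: "U \<in> tangent_obl n q Yh"
    unfolding tangent_iff[OF Yhc] using Uc orth by (auto intro!: sum.neutral simp: mult.commute)
  have G_ex: "is_rgrad n q L.Psi0 Yh (L.ghat q Yh)" by (rule L.ghat_rgrad[OF Yh_obl])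
  have fU0: "frob U (L.ghat q Yh) = 0"
  proof -
    have "frob U (L.ghat q Yh) = frob (L.ghat q Yh) U"
      unfolding frob_eq[OF Uc L.ghat_carr] frob_eq[OF L.ghat_carr Uc] by (simp add: mult.commute)
    also have "\<dots> = (\<Sum>a<n. \<Sum>b<n. L.gr q Yh b a * (\<Sum>j<q. U$$(b,j)*Yh$$(a,j) + Yh$$(b,j)*U$$(a,j)))"
      by (rule L.grad_identity[OF Yhc U_tan, symmetric])
    also have "\<dots> = 0"
    proof -
      have orth2: "U$$(l,j) * Yh$$(k,j) = 0" if "k<n" "l<n" "j<q" for k l j
        using orth that by (simp add: mult.commute)
      have "(\<Sum>j<q. U$$(b,j)*Yh$$(a,j) + Yh$$(b,j)*U$$(a,j)) = 0" if "a<n" "b<n" for a b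
      proof (rule sum.neutral, rule ballI)
        fix j assume "j \<in> {..<q}"
        hence j: "j<q" by auto
        have h: "U$$(b,j)*Yh$$(a,j) = 0" "Yh$$(b,j)*U$$(a,j) = 0"
          using orth2[OF that(1) that(2) j] orth[rule_format, OF that(2) that(1) j] by auto
        show "U$$(b,j)*Yh$$(a,j) + Yh$$(b,j)*U$$(a,j) = 0" by (simp only: h)
      qed
      thus ?thesis by simp
    qed
    finally show ?thesis .
  qed
  define H0 where "H0 = proj_obl Yh (L.W0 q Yh U)"
  have H_ex: "is_rhess n q L.Psi0 Yh U H0"
    unfolding is_rhess_def
  proof (intro conjI U_tan exI[of _ "L.ghat q"] ballI allI impI)
    fix Z assume "Z \<in> obl n q" thus "is_rgrad n q L.Psi0 Z (L.ghat q Z)" by (rule L.ghat_rgrad)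
  next
    fix \<gamma> assume c: "obl_curve n q Yh U \<gamma>"
    have d: "\<forall>i<n. \<forall>j<q. ((\<lambda>t. \<gamma> t $$ (i,j)) has_real_derivative U$$(i,j)) (at 0)" "\<gamma> 0 = Yh"
      using c unfolding obl_curve_def mat_curve_deriv_def by auto
    show "\<exists>W. mat_curve_deriv n q (\<lambda>t. L.ghat q (\<gamma> t)) 0 W \<and> H0 = proj_obl Yh W"
      unfolding mat_curve_deriv_def H0_def
      apply (rule exI[of _ "L.W0 q Yh U"])
      using L.ghat_deriv[OF d orth] L.ghat_carr by (auto simp: L.W0_def)
  qed
  have W_eq: "W = L.W0 q Yh U" if "mat_curve_deriv n q (\<lambda>t. L.ghat q (ncurve n q Yh U t)) 0 W" for W
  proof -
    have c: "obl_curve n q Yh U (ncurve n q Yh U)" by (rule ncurve_ok[OF Yh_obl U_tan])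
    have d: "\<forall>i<n. \<forall>j<q. ((\<lambda>t. ncurve n q Yh U t $$ (i,j)) has_real_derivative U$$(i,j)) (at 0)" "ncurve n q Yh U 0 = Yh"
      using c unfolding obl_curve_def mat_curve_deriv_def by auto
    show ?thesis
    proof (rule eq_matI)
      fix k i assume "k < dim_row (L.W0 q Yh U)" "i < dim_col (L.W0 q Yh U)"
      hence k: "k<n" and i: "i<q" by (auto simp: L.W0_def)
      show "W $$ (k,i) = L.W0 q Yh U $$ (k,i)"
        using that k i L.ghat_deriv[OF d orth k i] DERIV_unique unfolding mat_curve_deriv_def by blast
    qed (use that in \<open>auto simp: mat_curve_deriv_def L.W0_def\<close>)
  qed
  have neg: "frob U H0 < 0"
  proof -
    define W where "W = L.W0 q Yh U"
    define c where "c = (\<lambda>k. \<Sum>l<n. \<Sum>j<q. L.gr q Yh k l * Yh$$(l,j) * Yh$$(k,j))"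
    define gr where "gr = L.gr q Yh"
    define S where "S = Y * transpose_mat Y"
    define GP where "GP = gradPhi n m As b C \<sigma> y Xt S"
    define Xm where "Xm = GP - Diag (GP * S)"
    have Wc: "W \<in> carrier_mat n q" unfolding W_def L.W0_def by auto
    have W_ent: "W $$ (k,i) = 2*(\<Sum>l<n. gr k l * U$$(l,i)) - 2 * c k * U$$(k,i)" if "k<n" "i<q" for k i
      using that unfolding W_def L.W0_def c_def gr_def by auto
    have Sc: "S \<in> carrier_mat n n" unfolding S_def using Yc by auto
    have S_ent: "S $$ (k,l) = (\<Sum>j<p. Y$$(k,j) * Y$$(l,j))" if "k<n" "l<n" for k l
      unfolding S_def using mult_tr_entry[OF Yc that] .
    have sE_eq: "L.sE q Yh k l = S $$ (k,l)" if "k<n" "l<n" for k l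
      unfolding L.sE_def S_ent[OF that] q_def sum_split_add using Yh_ent that q_def by simp
    have GPc: "GP \<in> carrier_mat n n" unfolding GP_def gradPhi_def using XtC Sc
      by (auto simp: Dmat_def opAstar_def)
    have GP_ent: "GP $$ (k,l) = gr k l" if "k<n" "l<n" for k l
    proof -
      have "GP $$ (k,l) = Xt$$(k,l) - \<sigma> * (Mm$$(k,l) - S$$(k,l) - C$$(k,l)) + Dm$$(k,l)"
        unfolding GP_def gradPhi_def Dm_def[symmetric] Mm_def[symmetric]
        using that XtC Sc L.carr by simp
      thus ?thesis unfolding gr_def L.gr_def using sE_eq[OF that] by simp
    qed
    have GPS: "(GP * S) $$ (k,k) = c k" if "k<n" for k
    proof -
      have "(GP * S) $$ (k,k) = (\<Sum>l<n. GP$$(k,l) * S$$(l,k))"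
        using that GPc Sc by (auto simp: scalar_prod_def atLeast0LessThan intro!: sum.cong)
      also have "\<dots> = (\<Sum>l<n. gr k l * L.sE q Yh l k)"
        using that GP_ent sE_eq by auto
      also have "\<dots> = c k" unfolding c_def L.sE_def gr_def
        by (simp add: sum_distrib_left mult.assoc)
      finally show ?thesis .
    qed
    have Xm_ent: "Xm $$ (k,l) = gr k l - (if k = l then c k else 0)" if "k<n" "l<n" for k l
      unfolding Xm_def Diag_def using that GPc Sc GP_ent GPS by auto
    have Xmc: "Xm \<in> carrier_mat n n" unfolding Xm_def Diag_def using GPc Sc by auto
    have eig: "(\<Sum>l<n. gr k l * V$$(l,j)) - c k * V$$(k,j) = lam * V$$(k,j)"
      if "eigenvector Xm (col V j) lam" "k<n" "j<\<delta>" for k j lam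
    proof -
      have "(Xm *\<^sub>v col V j) $ k = lam * V$$(k,j)"
        using that assms(14) Xmc unfolding eigenvector_def by auto
      moreover have "(Xm *\<^sub>v col V j) $ k = (\<Sum>l<n. (gr k l - (if k = l then c k else 0)) * V$$(l,j))"
        using that assms(14) Xmc Xm_ent by (auto simp: scalar_prod_def atLeast0LessThan intro!: sum.cong)
      moreover have "(\<Sum>l<n. (gr k l - (if k = l then c k else 0)) * V$$(l,j))
          = (\<Sum>l<n. gr k l * V$$(l,j)) - (\<Sum>l<n. (if k = l then c k * V$$(l,j) else 0))"
        unfolding sum_subtractf[symmetric] by (rule sum.cong) (auto simp: algebra_simps)
      moreover have "(\<Sum>l<n. (if k = l then c k * V$$(l,j) else 0)) = c k * V$$(k,j)"
        using that(2) by (simp add: sum.delta)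
      ultimately show ?thesis by simp
    qed
    have H0_ent: "H0 $$ (k,i) = W$$(k,i) - (W * transpose_mat Yh)$$(k,k) * Yh$$(k,i)" if "k<n" "i<q" for k i
    proof -
      have M: "W * transpose_mat Yh \<in> carrier_mat n n" using Wc Yhc by auto
      show ?thesis unfolding H0_def proj_obl_def W_def[symmetric]
        using Diag_mult_entry[OF M Yhc that] that Wc Yhc M by (simp add: Diag_def)
    qed
    have "frob U H0 = (\<Sum>i<q. \<Sum>k<n. U$$(k,i) * H0$$(k,i))"
    proof -
      have "H0 \<in> carrier_mat n q" unfolding H0_def proj_obl_def W_def[symmetric] Diag_def using Wc Yhc by auto
      thus ?thesis using frob_eq[OF Uc] by auto
    qed
    also have "\<dots> = (\<Sum>i<q. \<Sum>k<n. U$$(k,i) * W$$(k,i))"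
    proof (intro sum.cong refl)
      fix i k assume "i \<in> {..<q}" "k \<in> {..<n}"
      hence i: "i<q" and k: "k<n" by auto
      have "U$$(k,i) * Yh$$(k,i) = 0" using orth k i by (simp add: mult.commute)
      thus "U$$(k,i) * H0$$(k,i) = U$$(k,i) * W$$(k,i)"
        unfolding H0_ent[OF k i] by (auto simp: algebra_simps)
    qed
    also have "\<dots> = (\<Sum>j<\<delta>. \<Sum>k<n. V$$(k,j) * W$$(k,p+j))"
      unfolding q_def sum_split_add using U_ent q_def by simp
    also have "\<dots> = (\<Sum>j<\<delta>. 2 * (\<Sum>k<n. V$$(k,j) * ((\<Sum>l<n. gr k l * V$$(l,j)) - c k * V$$(k,j))))"
    proof (intro sum.cong refl)
      fix j k assume "j \<in> {..<\<delta>}"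
      hence j: "j<\<delta>" by auto
      have s1: "(\<Sum>l<n. gr k l * U$$(l,p+j)) = (\<Sum>l<n. gr k l * V$$(l,j))" if "k<n" for k
        using U_ent j q_def by auto
      have w: "W$$(k,p+j) = 2 * ((\<Sum>l<n. gr k l * V$$(l,j)) - c k * V$$(k,j))" if "k<n" for k
        using W_ent[of k "p+j"] s1[OF that] U_ent[of k "p+j"] that j q_def by (simp add: algebra_simps)
      have "(\<Sum>k<n. V$$(k,j) * W$$(k,p+j)) = (\<Sum>k<n. 2 * (V$$(k,j) * ((\<Sum>l<n. gr k l * V$$(l,j)) - c k * V$$(k,j))))"
        by (rule sum.cong) (auto simp: w)
      thus "(\<Sum>k<n. V$$(k,j) * W$$(k,p+j)) = 2 * (\<Sum>k<n. V$$(k,j) * ((\<Sum>l<n. gr k l * V$$(l,j)) - c k * V$$(k,j)))"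
        by (simp only: sum_distrib_left)
    qed
    also have "\<dots> < 0"
    proof -
      have "(\<Sum>k<n. V$$(k,j) * ((\<Sum>l<n. gr k l * V$$(l,j)) - c k * V$$(k,j))) < 0" if j: "j<\<delta>" for j
      proof -
        obtain lam where lam: "lam < 0" "eigenvector Xm (col V j) lam"
          using assms(15) j unfolding Xm_def GP_def S_def by blast
        have "(\<Sum>k<n. V$$(k,j) * ((\<Sum>l<n. gr k l * V$$(l,j)) - c k * V$$(k,j)))
            = lam * (\<Sum>k<n. (V$$(k,j))\<^sup>2)"
          using eig[OF lam(2) _ j] by (simp add: sum_distrib_left power2_eq_square algebra_simps)
        moreover have "(\<Sum>k<n. (V$$(k,j))\<^sup>2) > 0"
        proof -
          have "col V j \<noteq> 0\<^sub>v n" using lam(2) Xmc unfolding eigenvector_def by auto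
          then obtain k where k: "k<n" "V$$(k,j) \<noteq> 0"
            using assms(14) j by (auto simp: vec_eq_iff)
          have "(\<Sum>k<n. (V$$(k,j))\<^sup>2) \<noteq> 0"
            using k by (subst sum_nonneg_eq_0_iff) auto
          thus ?thesis by (simp add: sum_nonneg order_le_neq_trans)
        qed
        ultimately show ?thesis using lam(1) by (simp add: mult_neg_pos)
      qed
      hence "0 < (\<Sum>j<\<delta>. - (2 * (\<Sum>k<n. V$$(k,j) * ((\<Sum>l<n. gr k l * V$$(l,j)) - c k * V$$(k,j)))))"
        using assms(13) by (intro sum_pos) auto
      thus ?thesis by (simp add: sum_negf)
    qed
    finally show ?thesis .
  qed
  have H_neg: "frob U H < 0" if h: "is_rhess n q L.Psi0 Yh U H" for H
  proof -
    obtain g where g: "\<forall>Z \<in> obl n q. is_rgrad n q L.Psi0 Z (g Z)"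
      and gc: "\<forall>\<gamma>. obl_curve n q Yh U \<gamma> \<longrightarrow> (\<exists>W. mat_curve_deriv n q (\<lambda>t. g (\<gamma> t)) 0 W \<and> H = proj_obl Yh W)"
      using h unfolding is_rhess_def by blast
    have c: "obl_curve n q Yh U (ncurve n q Yh U)" by (rule ncurve_ok[OF Yh_obl U_tan])
    then obtain W where W: "mat_curve_deriv n q (\<lambda>t. g (ncurve n q Yh U t)) 0 W" "H = proj_obl Yh W"
      using gc by blast
    have "g (ncurve n q Yh U t) = L.ghat q (ncurve n q Yh U t)" for t
    proof -
      have o: "ncurve n q Yh U t \<in> obl n q" using c unfolding obl_curve_def by auto
      show ?thesis using rgrad_unique[OF o] g o L.ghat_rgrad[OF o] by blast
    qed
    hence "W = L.W0 q Yh U" using W(1) W_eq by simp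
    thus ?thesis using W(2) neg H0_def by simp
  qed
  show ?thesis
    unfolding Let_def PsiEq q_def[symmetric] Yh_def[symmetric] U_def[symmetric]
    using Yh_obl U_tan G_ex fU0 H_ex H_neg rgrad_unique[OF Yh_obl G_ex] by metis
qed

end
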